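(* Let $\mathfrak{n}$ be the real $7$-dimensional Lie algebra with basis $e_1,\dots,e_7$ whose nonzero brackets (up to antisymmetry) are $[e_1,e_2]=e_3$, $[e_1,e_3]=e_4$, $[e_1,e_4]=e_6$, $[e_1,e_5]=e_7$, $[e_1,e_6]=e_7$, $[e_2,e_3]=e_5$, $[e_2,e_4]=e_7$. Then $\mathfrak{n}$ is an Einstein nilradical.
   Context: A real nilpotent Lie algebra $\mathfrak{n}$ is called an Einstein nilradical if it admits an inner product such that the left-invariant Riemannian metric it defines on the simply connected nilpotent Lie group with Lie algebra $\mathfrak{n}$ is a nilsoliton, i.e. its Ricci operator satisfies $\mathrm{Ric}=c\,\mathrm{Id}+D$ for some $c\in\mathbb{R}$ and some derivation $D$ of $\mathfrak{n}$. Brackets of basis elements not listed are zero. *)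

theory Defs
  imports "HOL-Analysis.Analysis"
begin

datatype idx = E1 | E2 | E3 | E4 | E5 | E6 | E7

instance idx :: finite
proof
  have "UNIV = {E1, E2, E3, E4, E5, E6, E7}"
    by (auto intro: idx.exhaust)
  then show "finite (UNIV :: idx set)" by (metis finite.emptyI finite.insertI)
qed

type_synonym vec7 = "real ^ idx"

definition e :: "idx \<Rightarrow> vec7" where "e i = axis i 1"

fun up :: "idx \<Rightarrow> idx \<Rightarrow> vec7" where
  "up E1 E2 = e E3"
| "up E1 E3 = e E4"
| "up E1 E4 = e E6"
| "up E1 E5 = e E7"
| "up E1 E6 = e E7"
| "up E2 E3 = e E5"
| "up E2 E4 = e E7"
| "up _ _ = 0"

definition basis_br :: "idx \<Rightarrow> idx \<Rightarrow> vec7" where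
  "basis_br i j = up i j - up j i"

definition br :: "vec7 \<Rightarrow> vec7 \<Rightarrow> vec7" where
  "br x y = (\<Sum>i\<in>UNIV. \<Sum>j\<in>UNIV. (x $ i * y $ j) *\<^sub>R basis_br i j)"

definition is_inner_product :: "(vec7 \<Rightarrow> vec7 \<Rightarrow> real) \<Rightarrow> bool" where
  "is_inner_product g \<longleftrightarrow> bilinear g \<and> (\<forall>x y. g x y = g y x) \<and> (\<forall>x. x \<noteq> 0 \<longrightarrow> g x x > 0)"

definition is_orthonormal_basis :: "(vec7 \<Rightarrow> vec7 \<Rightarrow> real) \<Rightarrow> (idx \<Rightarrow> vec7) \<Rightarrow> bool" where
  "is_orthonormal_basis g b \<longleftrightarrow> (\<forall>i j. g (b i) (b j) = (if i = j then 1 else 0))"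

definition is_derivation :: "(vec7 \<Rightarrow> vec7) \<Rightarrow> bool" where
  "is_derivation D \<longleftrightarrow> linear D \<and> (\<forall>x y. D (br x y) = br (D x) y + br x (D y))"

text \<open>Ricci form of the left-invariant metric g on the nilpotent Lie group,
  computed in a g-orthonormal basis b (standard formula for nilpotent Lie algebras):
  g(Ric x, y) = -1/2 sum_{i,j} g([x,b_i],b_j) g([y,b_i],b_j)
              + 1/4 sum_{i,j} g([b_i,b_j],x) g([b_i,b_j],y).\<close>
definition ric_form :: "(vec7 \<Rightarrow> vec7 \<Rightarrow> real) \<Rightarrow> (idx \<Rightarrow> vec7) \<Rightarrow> vec7 \<Rightarrow> vec7 \<Rightarrow> real" where
  "ric_form g b x y =
     - (1/2) * (\<Sum>i\<in>UNIV. \<Sum>j\<in>UNIV. g (br x (b i)) (b j) * g (br y (b i)) (b j))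
     + (1/4) * (\<Sum>i\<in>UNIV. \<Sum>j\<in>UNIV. g (br (b i) (b j)) x * g (br (b i) (b j)) y)"

definition ricci :: "(vec7 \<Rightarrow> vec7 \<Rightarrow> real) \<Rightarrow> (idx \<Rightarrow> vec7) \<Rightarrow> vec7 \<Rightarrow> vec7" where
  "ricci g b x = (\<Sum>k\<in>UNIV. ric_form g b x (b k) *\<^sub>R b k)"

end

theory Submission
  imports Defs
begin
lemma UNIV_idx: "(UNIV::idx set) = {E1,E2,E3,E4,E5,E6,E7}" by (auto intro: idx.exhaust)
lemma all_idx: "(\<forall>k::idx. P k) \<longleftrightarrow> P E1 \<and> P E2 \<and> P E3 \<and> P E4 \<and> P E5 \<and> P E6 \<and> P E7"
  by (metis idx.exhaust)
lemma sum_idx: "(\<Sum>k\<in>(UNIV::idx set). f k) = f E1 + f E2 + f E3 + f E4 + f E5 + f E6 + f E7"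
  by (simp add: UNIV_idx algebra_simps)
definition r2 :: real where "r2 = sqrt 2"
definition r7 :: real where "r7 = sqrt 7"
definition r11 :: real where "r11 = sqrt 11"
lemma r2sq: "r2 * r2 = 2" "r2 * (r2 * z) = 2 * z" unfolding r2_def by simp_all
lemma r7sq: "r7 * r7 = 7" "r7 * (r7 * z) = 7 * z" unfolding r7_def by simp_all
lemma r11sq: "r11 * r11 = 11" "r11 * (r11 * z) = 11 * z" unfolding r11_def by simp_all
lemmas rsq = r2sq r7sq r11sq

fun Le :: "idx \<Rightarrow> vec7" where
  "Le E1 = axis E1 1"
| "Le E2 = (2*r2) *\<^sub>R axis E2 1"
| "Le E3 = (6*r2) *\<^sub>R axis E3 1"
| "Le E4 = (12*r7) *\<^sub>R axis E4 1"
| "Le E5 = (72/11*r2*r7*r11) *\<^sub>R axis E5 1 - (48/11*r7*r11) *\<^sub>R axis E6 1"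
| "Le E6 = (72/11*r2*r7*r11) *\<^sub>R axis E5 1 + (84/11*r7*r11) *\<^sub>R axis E6 1"
| "Le E7 = (72*r2*r7) *\<^sub>R axis E7 1"

definition L :: "vec7 \<Rightarrow> vec7" where "L x = (\<Sum>k\<in>UNIV. x $ k *\<^sub>R Le k)"

fun bv :: "idx \<Rightarrow> vec7" where
  "bv E1 = e E1"
| "bv E2 = (r2/4) *\<^sub>R e E2"
| "bv E3 = (r2/12) *\<^sub>R e E3"
| "bv E4 = (r7/84) *\<^sub>R e E4"
| "bv E5 = (7/11088*r2*r7*r11) *\<^sub>R e E5 + (4/11088*r2*r7*r11) *\<^sub>R e E6"
| "bv E6 = (-1/924*r7*r11) *\<^sub>R e E5 + (1/924*r7*r11) *\<^sub>R e E6"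
| "bv E7 = (1/1008*r2*r7) *\<^sub>R e E7"

fun Cup :: "idx \<Rightarrow> idx \<Rightarrow> vec7" where
  "Cup E1 E2 = 3 *\<^sub>R axis E3 1"
| "Cup E1 E3 = (r2*r7) *\<^sub>R axis E4 1"
| "Cup E1 E4 = (6/11*r2*r11) *\<^sub>R axis E5 1 + (7/11*r11) *\<^sub>R axis E6 1"
| "Cup E1 E5 = r11 *\<^sub>R axis E7 1"
| "Cup E2 E3 = (3/11*r2*r7*r11) *\<^sub>R axis E5 1 - (2/11*r7*r11) *\<^sub>R axis E6 1"
| "Cup E2 E4 = 3 *\<^sub>R axis E7 1"
| "Cup _ _ = 0"

definition Cb :: "idx \<Rightarrow> idx \<Rightarrow> vec7" where "Cb i j = Cup i j - Cup j i"

lemma br_add_left: "br (u + v) w = br u w + br v w"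
  by (simp add: br_def algebra_simps scaleR_add_left sum.distrib)
lemma br_add_right: "br w (u + v) = br w u + br w v"
  by (simp add: br_def algebra_simps scaleR_add_left sum.distrib)
lemma br_scale_left: "br (a *\<^sub>R u) w = a *\<^sub>R br u w"
  by (simp add: br_def scaleR_sum_right algebra_simps)
lemma br_scale_right: "br w (a *\<^sub>R u) = a *\<^sub>R br w u"
  by (simp add: br_def scaleR_sum_right algebra_simps)
lemma ifscale: "(if P then 1 else 0) *\<^sub>R (v::vec7) = (if P then v else 0)" by simp
lemma br_diff_left: "br (u - v) w = br u w - br v w"
  by (simp add: br_def algebra_simps scaleR_diff_left sum_subtractf)
lemma br_diff_right: "br w (u - v) = br w u - br w v"
  by (simp add: br_def algebra_simps scaleR_diff_left sum_subtractf)
lemma br_neg_left: "br (- u) w = - br u w"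
  using br_scale_left[of "-1" u w] by simp
lemma br_neg_right: "br w (- u) = - br w u"
  using br_scale_right[of w "-1" u] by simp
lemma br_e: "br (e i) (e j) = basis_br i j"
proof -
  have "br (e i) (e j) = (\<Sum>k\<in>UNIV. if k = i then (\<Sum>l\<in>UNIV. if l = j then basis_br k l else 0) else 0)"
    unfolding br_def e_def by (intro sum.cong refl) (auto simp: axis_def ifscale intro!: sum.neutral)
  also have "\<dots> = basis_br i j"
    by simp
  finally show ?thesis .
qed

lemma L_add: "L (u + v) = L u + L v" by (simp add: L_def scaleR_add_left sum.distrib)
lemma L_scale: "L (a *\<^sub>R u) = a *\<^sub>R L u" by (simp add: L_def scaleR_sum_right)
lemma L_diff: "L (u - v) = L u - L v" by (simp add: L_def scaleR_diff_left sum_subtractf)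
lemma L_zero: "L 0 = 0" by (simp add: L_def)
lemma L_neg: "L (- u) = - L u" using L_scale[of "-1" u] by simp
lemma L_e: "L (e k) = Le k"
  unfolding L_def e_def by (simp add: axis_def if_distrib[of "\<lambda>c. c *\<^sub>R _"] sum.delta cong: if_cong)

lemma LC: "L (br (bv i) (bv j)) = Cb i j"
  apply (cases i; cases j)
  apply (simp_all add: br_add_left br_add_right br_scale_left br_scale_right br_e basis_br_def
     br_diff_left br_diff_right br_neg_left br_neg_right L_neg
     L_add L_scale L_diff L_zero L_e Cb_def vec_eq_iff all_idx axis_def)
  apply (simp_all add: algebra_simps rsq)
  done

lemma br_zero_left: "br 0 w = 0" by (simp add: br_def)
lemma br_zero_right: "br w 0 = 0" by (simp add: br_def)
lemma L_sum: "finite A \<Longrightarrow> L (sum f A) = (\<Sum>k\<in>A. L (f k))"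
  by (induction A rule: finite_induct) (simp_all add: L_add L_zero)
lemma br_sum_left: "finite A \<Longrightarrow> br (sum f A) w = (\<Sum>k\<in>A. br (f k) w)"
  by (induction A rule: finite_induct) (simp_all add: br_add_left br_zero_left)
lemma br_sum_right: "finite A \<Longrightarrow> br w (sum f A) = (\<Sum>k\<in>A. br w (f k))"
  by (induction A rule: finite_induct) (simp_all add: br_add_right br_zero_right)

lemma Lb: "L (bv i) = axis i 1"
  apply (cases i)
  apply (simp_all add: L_add L_scale L_diff L_zero L_e vec_eq_iff all_idx axis_def)
  apply (simp_all add: algebra_simps rsq)
  done

definition B :: "vec7 \<Rightarrow> vec7" where "B a = (\<Sum>m\<in>UNIV. a $ m *\<^sub>R bv m)"

lemma B_add: "B (u + v) = B u + B v" by (simp add: B_def scaleR_add_left sum.distrib)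
lemma B_scale: "B (c *\<^sub>R u) = c *\<^sub>R B u" by (simp add: B_def scaleR_sum_right)
lemma B_diff: "B (u - v) = B u - B v" by (simp add: B_def scaleR_diff_left sum_subtractf)
lemma B_zero: "B 0 = 0" by (simp add: B_def)
lemma B_sum: "finite A \<Longrightarrow> B (sum f A) = (\<Sum>k\<in>A. B (f k))"
  by (induction A rule: finite_induct) (simp_all add: B_add B_zero)

lemma L_B: "L (B a) = a"
proof -
  have "L (B a) = (\<Sum>m\<in>UNIV. a $ m *\<^sub>R axis m 1)"
    by (simp add: B_def L_sum L_scale Lb)
  also have "\<dots> = a" using basis_expansion[of a] by (simp add: scalar_mult_eq_scaleR)
  finally show ?thesis .
qed

lemma Le_recon: "(\<Sum>k\<in>UNIV. Le l $ k *\<^sub>R bv k) = e l"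
  apply (cases l)
  apply (simp_all add: sum_idx vec_eq_iff all_idx axis_def e_def)
  apply (simp_all add: algebra_simps rsq)
  done

lemma B_L: "B (L x) = x"
proof -
  have "B (L x) = B (\<Sum>l\<in>UNIV. x $ l *\<^sub>R Le l)" by (simp add: L_def)
  also have "\<dots> = (\<Sum>l\<in>UNIV. x $ l *\<^sub>R B (Le l))" by (simp add: B_sum B_scale)
  also have "\<dots> = (\<Sum>l\<in>UNIV. x $ l *\<^sub>R axis l 1)" by (simp add: B_def Le_recon e_def)
  also have "\<dots> = x" using basis_expansion[of x] by (simp add: scalar_mult_eq_scaleR)
  finally show ?thesis .
qed

definition P :: "vec7 \<Rightarrow> vec7 \<Rightarrow> vec7" where
  "P a c = (\<Sum>i\<in>UNIV. \<Sum>j\<in>UNIV. (a $ i * c $ j) *\<^sub>R Cb i j)"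

lemma brB: "br (B a) (B c) = B (P a c)"
proof -
  have bb: "br (bv i) (bv j) = B (Cb i j)" for i j
    using B_L[of "br (bv i) (bv j)"] by (simp add: LC)
  have "br (B a) (B c) = (\<Sum>i\<in>UNIV. \<Sum>j\<in>UNIV. (a $ i * c $ j) *\<^sub>R br (bv i) (bv j))"
    apply (simp add: B_def br_sum_left br_sum_right br_scale_left br_scale_right scaleR_sum_right)
    apply (subst sum.swap)
    apply (simp add: mult.commute)
    done
  also have "\<dots> = B (P a c)"
    by (simp add: bb P_def B_sum B_scale)
  finally show ?thesis .
qed

fun wt :: "idx \<Rightarrow> real" where
  "wt E1 = 1" | "wt E2 = 2" | "wt E3 = 3" | "wt E4 = 4" | "wt E5 = 5" | "wt E6 = 5" | "wt E7 = 6"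

lemma Cb_wt: "Cb i j $ m * wt m = (wt i + wt j) * Cb i j $ m"
  by (cases i; cases j; cases m) (simp_all add: Cb_def axis_def)

definition W :: "vec7 \<Rightarrow> vec7" where "W a = (\<chi> m. 13/2 * wt m * a $ m)"

lemma W_P: "W (P a c) = P (W a) c + P a (W c)"
proof -
  have "(13/2 * wt m * (\<Sum>i\<in>UNIV. \<Sum>j\<in>UNIV. a $ i * c $ j * Cb i j $ m)) =
     (\<Sum>i\<in>UNIV. \<Sum>j\<in>UNIV. 13/2 * wt i * a $ i * c $ j * Cb i j $ m) +
     (\<Sum>i\<in>UNIV. \<Sum>j\<in>UNIV. a $ i * (13/2 * wt j * c $ j) * Cb i j $ m)" for m
  proof -
    have "(13/2 * wt m * (\<Sum>i\<in>UNIV. \<Sum>j\<in>UNIV. a $ i * c $ j * Cb i j $ m)) =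
       (\<Sum>i\<in>UNIV. \<Sum>j\<in>UNIV. 13/2 * a $ i * c $ j * (Cb i j $ m * wt m))"
      by (simp add: sum_distrib_left algebra_simps)
    also have "\<dots> = (\<Sum>i\<in>UNIV. \<Sum>j\<in>UNIV. 13/2 * wt i * a $ i * c $ j * Cb i j $ m + a $ i * (13/2 * wt j * c $ j) * Cb i j $ m)"
      unfolding Cb_wt by (simp add: algebra_simps add_divide_distrib)
    finally show ?thesis by (simp add: sum.distrib algebra_simps add_divide_distrib)
  qed
  then show ?thesis
    by (simp add: W_def P_def vec_eq_iff algebra_simps)
qed

lemma W_add: "W (u + v) = W u + W v" by (simp add: W_def vec_eq_iff algebra_simps)
lemma W_scale: "W (r *\<^sub>R u) = r *\<^sub>R W u" by (simp add: W_def vec_eq_iff algebra_simps)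

definition gg :: "vec7 \<Rightarrow> vec7 \<Rightarrow> real" where "gg x y = L x \<bullet> L y"

definition DD :: "vec7 \<Rightarrow> vec7" where "DD x = B (W (L x))"

lemma gg_inner: "is_inner_product gg"
proof -
  have lin: "linear L" by (rule linearI) (simp_all add: L_add L_scale)
  have "bilinear gg"
    unfolding bilinear_def gg_def
    by (auto intro!: linearI simp: L_add L_scale inner_add_left inner_add_right)
  moreover have "gg x y = gg y x" for x y by (simp add: gg_def inner_commute)
  moreover have "gg x x > 0" if "x \<noteq> 0" for x
  proof -
    have "L x \<noteq> 0" using that B_L[of x] B_zero by auto
    then show ?thesis by (simp add: gg_def)
  qed
  ultimately show ?thesis unfolding is_inner_product_def by blast
qed

lemma gg_on: "is_orthonormal_basis gg bv"
  unfolding is_orthonormal_basis_def gg_def by (simp add: Lb inner_axis_axis)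

lemma DD_der: "is_derivation DD"
proof -
  have "linear DD"
    by (rule linearI) (simp_all add: DD_def L_add L_scale W_add W_scale B_add B_scale)
  moreover have "DD (br x y) = br (DD x) y + br x (DD y)" for x y
  proof -
    have "br x y = B (P (L x) (L y))" using brB[of "L x" "L y"] by (simp add: B_L)
    then have "DD (br x y) = B (W (P (L x) (L y)))" by (simp add: DD_def L_B)
    also have "\<dots> = B (P (W (L x)) (L y)) + B (P (L x) (W (L y)))" by (simp add: W_P B_add)
    also have "\<dots> = br (DD x) y + br x (DD y)"
      by (simp add: DD_def flip: brB) (simp add: B_L)
    finally show ?thesis .
  qed
  ultimately show ?thesis unfolding is_derivation_def by blast
qed

lemma gg_b: "gg u (bv k) = L u $ k" by (simp add: gg_def Lb inner_axis)

lemma Lbrx: "L (br x (bv i)) = (\<Sum>k\<in>UNIV. L x $ k *\<^sub>R Cb k i)"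
proof -
  have "br x (bv i) = br (B (L x)) (bv i)" by (simp add: B_L)
  then show ?thesis by (simp add: B_def br_sum_left br_scale_left L_sum L_scale LC)
qed

lemma swap3: "(\<Sum>i\<in>SA. \<Sum>j\<in>SB. (\<Sum>k\<in>SC. f k i j) * g i j) = (\<Sum>k\<in>SC. \<Sum>i\<in>SA. \<Sum>j\<in>SB. f k i j * (g i j::real))"
proof -
  have "(\<Sum>i\<in>SA. \<Sum>j\<in>SB. (\<Sum>k\<in>SC. f k i j) * g i j) = (\<Sum>i\<in>SA. \<Sum>j\<in>SB. \<Sum>k\<in>SC. f k i j * g i j)"
    by (simp add: sum_distrib_right)
  also have "\<dots> = (\<Sum>i\<in>SA. \<Sum>k\<in>SC. \<Sum>j\<in>SB. f k i j * g i j)"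
    by (rule sum.cong[OF refl], rule sum.swap)
  also have "\<dots> = (\<Sum>k\<in>SC. \<Sum>i\<in>SA. \<Sum>j\<in>SB. f k i j * g i j)"
    by (rule sum.swap)
  finally show ?thesis .
qed

definition Rf :: "idx \<Rightarrow> idx \<Rightarrow> real" where
  "Rf k m = - (1/2) * (\<Sum>i\<in>UNIV. \<Sum>j\<in>UNIV. Cb k i $ j * Cb m i $ j)
            + (1/4) * (\<Sum>i\<in>UNIV. \<Sum>j\<in>UNIV. Cb i j $ k * Cb i j $ m)"

lemma Rf_val: "Rf k m = (if k = m then -29 + 13/2 * wt m else 0)"
  apply (cases k; cases m)
  apply (simp_all add: Rf_def sum_idx Cb_def axis_def)
  apply (simp_all add: algebra_simps rsq)
  done

lemma ric_b: "ric_form gg bv x (bv m) = (-29 + 13/2 * wt m) * L x $ m"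
proof -
  have s1: "(\<Sum>i\<in>UNIV. \<Sum>j\<in>UNIV. gg (br x (bv i)) (bv j) * gg (br (bv m) (bv i)) (bv j))
      = (\<Sum>k\<in>UNIV. L x $ k * (\<Sum>i\<in>UNIV. \<Sum>j\<in>UNIV. Cb k i $ j * Cb m i $ j))"
  proof -
    have h1: "gg (br x (bv i)) (bv j) = (\<Sum>k\<in>UNIV. L x $ k * Cb k i $ j)" for i j
      by (simp add: gg_b Lbrx)
    have h2: "gg (br (bv m) (bv i)) (bv j) = Cb m i $ j" for i j
      by (simp add: gg_b LC)
    show ?thesis unfolding h2 h1 swap3 by (simp add: sum_distrib_left mult.assoc)
  qed
  have s2: "(\<Sum>i\<in>UNIV. \<Sum>j\<in>UNIV. gg (br (bv i) (bv j)) x * gg (br (bv i) (bv j)) (bv m))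
      = (\<Sum>k\<in>UNIV. L x $ k * (\<Sum>i\<in>UNIV. \<Sum>j\<in>UNIV. Cb i j $ k * Cb i j $ m))"
  proof -
    have h3: "gg (br (bv i) (bv j)) x = (\<Sum>k\<in>UNIV. Cb i j $ k * L x $ k)" for i j
      by (simp add: gg_def LC inner_vec_def)
    have h4: "gg (br (bv i) (bv j)) (bv m) = Cb i j $ m" for i j
      by (simp add: gg_b LC)
    show ?thesis
      unfolding h4 h3 swap3 by (simp add: sum_distrib_left mult_ac)
  qed
  have "ric_form gg bv x (bv m) = (\<Sum>k\<in>UNIV. L x $ k * Rf k m)"
    unfolding ric_form_def s1 s2 Rf_def
    by (simp add: sum_distrib_left sum.distrib algebra_simps flip: sum_distrib_right)
  also have "\<dots> = (-29 + 13/2 * wt m) * L x $ m"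
    by (simp add: Rf_val if_distrib cong: if_cong)
  finally show ?thesis .
qed

theorem mainTheorem11:
  shows "\<exists>g b c D. is_inner_product g \<and> is_orthonormal_basis g b \<and> is_derivation D \<and>
           (\<forall>x. ricci g b x = c *\<^sub>R x + D x)"
proof (intro exI conjI allI)
  show "is_inner_product gg" by (rule gg_inner)
  show "is_orthonormal_basis gg bv" by (rule gg_on)
  show "is_derivation DD" by (rule DD_der)
  fix x
  have "ricci gg bv x = B ((-29) *\<^sub>R L x + W (L x))"
    by (simp add: ricci_def ric_b B_def W_def algebra_simps)
  also have "\<dots> = (-29) *\<^sub>R x + DD x"
    by (simp add: B_add B_scale B_L DD_def B_diff)
  finally show "ricci gg bv x = (-29) *\<^sub>R x + DD x" .
qed
end
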